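(* There is an absolute constant $c>0$ such that, for every graph $G=(V,E)$ on $n\ge2$ vertices, with $\alpha=c/\log n$, the edge set of $G$ can be decomposed into an edge-disjoint union of subgraphs $G_1\uplus G_2\uplus\cdots\uplus G_k$ such that (a) each vertex appears in at most $O(\log^2 n)$ of the subgraphs, and (b) each subgraph $G_i$ is an $\frac{\alpha}{4}$-weakly-regular $\alpha$-expander.
   Context: For a graph $H=(U,F)$ and $S\subseteq U$, $\mathrm{vol}(S)=\sum_{v\in S}\deg_H(v)$. $H$ is an $\alpha$-expander if for every $S\subseteq U$, $|F(S,U\setminus S)|\ge\alpha\min\{\mathrm{vol}(S),\mathrm{vol}(U\setminus S)\}$. For $\gamma\in[0,1]$, $H$ is $\gamma$-weakly-regular if every vertex of $H$ has degree at least $\gamma$ times the average degree $\frac{1}{|U|}\sum_{u\in U}\deg_H(u)$. The $O(\cdot)$ hides an absolute constant. *)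

theory Defs
  imports Complex_Main
begin

definition simple_graph :: "'a set \<Rightarrow> 'a set set \<Rightarrow> bool" where
  "simple_graph V E \<longleftrightarrow> finite V \<and>
     (\<forall>e\<in>E. \<exists>u v. e = {u, v} \<and> u \<noteq> v \<and> u \<in> V \<and> v \<in> V)"

definition deg :: "'a set set \<Rightarrow> 'a \<Rightarrow> nat" where
  "deg F v = card {e\<in>F. v \<in> e}"

definition vol :: "'a set set \<Rightarrow> 'a set \<Rightarrow> nat" where
  "vol F S = (\<Sum>v\<in>S. deg F v)"

definition cut_edges :: "'a set set \<Rightarrow> 'a set \<Rightarrow> 'a set \<Rightarrow> 'a set set" where
  "cut_edges F S T = {e\<in>F. e \<inter> S \<noteq> {} \<and> e \<inter> T \<noteq> {}}"

definition is_expander :: "real \<Rightarrow> 'a set \<Rightarrow> 'a set set \<Rightarrow> bool" where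
  "is_expander \<alpha> U F \<longleftrightarrow>
     (\<forall>S\<subseteq>U. real (card (cut_edges F S (U - S)))
               \<ge> \<alpha> * real (min (vol F S) (vol F (U - S))))"

definition weakly_regular :: "real \<Rightarrow> 'a set \<Rightarrow> 'a set set \<Rightarrow> bool" where
  "weakly_regular \<gamma> U F \<longleftrightarrow>
     (\<forall>u\<in>U. real (deg F u) \<ge> \<gamma> * (real (\<Sum>w\<in>U. deg F w) / real (card U)))"

end

theory Submission
  imports Defs
begin

definition ind :: "'a set set \<Rightarrow> 'a set \<Rightarrow> 'a set set" where
  "ind E X = {e\<in>E. e \<subseteq> X}"

definition part :: "'a set \<Rightarrow> 'a set set \<Rightarrow> bool" where
  "part V P \<longleftrightarrow> (\<forall>X\<in>P. X \<noteq> {} \<and> X \<subseteq> V) \<and> \<Union>P = V \<and>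
     (\<forall>X\<in>P. \<forall>Y\<in>P. X \<noteq> Y \<longrightarrow> X \<inter> Y = {})"

definition crossE :: "'a set set \<Rightarrow> 'a set set \<Rightarrow> 'a set set" where
  "crossE E P = E - (\<Union>X\<in>P. ind E X)"

definition gx :: "real \<Rightarrow> real" where "gx x = x * ln x"

definition Jf :: "real \<Rightarrow> 'a set set \<Rightarrow> 'a set set \<Rightarrow> real" where
  "Jf \<phi> E P = real (card (crossE E P)) + 2*\<phi>*(\<Sum>X\<in>P. gx (real (vol E X)))
     + \<phi>/4 * (\<Sum>X\<in>P. real (vol E X) * ln (real (card X)))"

lemma sg_edge: assumes "simple_graph V E" "e \<in> E"
  shows "\<exists>u v. e = {u,v} \<and> u \<noteq> v \<and> u \<in> V \<and> v \<in> V"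
proof -
  have "\<forall>e\<in>E. \<exists>u v. e = {u, v} \<and> u \<noteq> v \<and> u \<in> V \<and> v \<in> V"
    using assms(1) unfolding simple_graph_def by (rule conjunct2)
  then show ?thesis using assms(2) by (rule bspec)
qed

lemma sg_finite: assumes "simple_graph V E" shows "finite E"
proof -
  have "e \<in> Pow V" if eE: "e \<in> E" for e
  proof -
    obtain u v where "e = {u,v}" "u \<in> V" "v \<in> V" using sg_edge[OF assms eE] by metis
    then show ?thesis by simp
  qed
  then have "E \<subseteq> Pow V" by (rule subsetI)
  moreover have "finite V" using assms unfolding simple_graph_def by (rule conjunct1)
  ultimately show ?thesis by (simp add: finite_subset)
qed

lemma sg_ind: assumes "simple_graph V E" "X \<subseteq> V" shows "simple_graph X (ind E X)"
proof -
  have "finite X" using assms finite_subset unfolding simple_graph_def by blast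
  moreover have "\<exists>u v. e = {u, v} \<and> u \<noteq> v \<and> u \<in> X \<and> v \<in> X" if "e \<in> ind E X" for e
  proof -
    have "e \<in> E" "e \<subseteq> X" using that unfolding ind_def by auto
    then obtain u v where "e = {u,v}" "u \<noteq> v" using sg_edge[OF assms(1)] by blast
    then show ?thesis using \<open>e \<subseteq> X\<close> by auto
  qed
  ultimately show ?thesis unfolding simple_graph_def by blast
qed

lemma sg_sub: "simple_graph V E \<Longrightarrow> F \<subseteq> E \<Longrightarrow> simple_graph V F"
  unfolding simple_graph_def by blast

lemma part_finite: assumes "finite V" "part V P" shows "finite P"
proof -
  have "P \<subseteq> Pow V" using assms(2) unfolding part_def by blast
  then show ?thesis using assms(1) finite_subset by blast
qed

lemma gx_nonneg: "gx (real (n::nat)) \<ge> 0"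
  unfolding gx_def by (cases "n = 0") auto

lemma gx_split:
  assumes "a \<ge> 0" "b \<ge> 0"
  shows "gx a + gx b + ln 2 * min a b \<le> gx (a + b)"
proof -
  have key: "gx a + gx b + ln 2 * a \<le> gx (a+b)" if "0 \<le> a" "a \<le> b" for a b :: real
  proof (cases "a = 0")
    case True
    then show ?thesis unfolding gx_def by simp
  next
    case False
    then have a0: "a > 0" using that by auto
    have ab: "0 < (a+b)/2" "a \<le> (a+b)/2" using a0 that by auto
    have "ln a \<le> ln ((a+b)/2)" using ln_le_cancel_iff[OF a0 ab(1)] ab(2) by blast
    also have "ln ((a+b)/2) = ln (a+b) - ln 2" using a0 that by (simp add: ln_div)
    finally have l1: "ln a \<le> ln (a+b) - ln 2" .
    have 1: "a * ln a \<le> a * (ln (a+b) - ln 2)" using mult_left_mono[OF l1, of a] a0 by simp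
    have b0: "0 < b" "0 < a + b" using a0 that by auto
    have "ln b \<le> ln (a+b)" using ln_le_cancel_iff[OF b0] a0 by simp
    then have 2: "b * ln b \<le> b * ln (a+b)" using mult_left_mono b0 by (metis less_eq_real_def)
    show ?thesis unfolding gx_def using 1 2 by (simp add: algebra_simps)
  qed
  show ?thesis
  proof (cases "a \<le> b")
    case True
    then show ?thesis using key[of a b] assms by simp
  next
    case False
    then show ?thesis using key[of b a] assms by (simp add: add.commute)
  qed
qed

lemma ln2_ge: "ln (2::real) \<ge> 1/2"
proof -
  have "ln (1/2::real) \<le> 1/2 - 1" by (rule ln_le_minus_one) simp
  then show ?thesis by (simp add: ln_div)
qed

lemma ln_diff_ge:
  assumes "x \<ge> (2::real)"
  shows "ln x - ln (x - 1) \<ge> 1/x"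
proof -
  have "ln ((x-1)/x) \<le> (x-1)/x - 1" using assms by (intro ln_le_minus_one) auto
  also have "\<dots> = - 1/x" using assms by (simp add: field_simps)
  finally show ?thesis using assms by (simp add: ln_div)
qed

lemma vol_union: "finite X \<Longrightarrow> S \<subseteq> X \<Longrightarrow> vol E X = vol E S + vol E (X - S)"
  unfolding vol_def by (simp add: sum.subset_diff[of S X] add.commute)

lemma deg_ind_le: "finite E \<Longrightarrow> deg (ind E X) v \<le> deg E v"
  unfolding deg_def ind_def by (intro card_mono) auto

lemma vol_ind_le: "finite E \<Longrightarrow> vol (ind E X) S \<le> vol E S"
  unfolding vol_def by (intro sum_mono deg_ind_le)

lemma handshake:
  assumes "simple_graph V E"
  shows "vol E V = 2 * card E"
proof -
  have fV: "finite V" using assms unfolding simple_graph_def by blast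
  have fE: "finite E" using sg_finite[OF assms] .
  have "vol E V = (\<Sum>v\<in>V. \<Sum>e\<in>E. if v \<in> e then 1 else (0::nat))"
    unfolding vol_def deg_def using fE by (simp add: sum.If_cases Int_def)
  also have "\<dots> = (\<Sum>e\<in>E. \<Sum>v\<in>V. if v \<in> e then 1 else (0::nat))" by (rule sum.swap)
  also have "\<dots> = (\<Sum>e\<in>E. 2)"
  proof (rule sum.cong)
    fix e assume "e \<in> E"
    then obtain u w where e: "e = {u,w}" "u \<noteq> w" "u \<in> V" "w \<in> V" using sg_edge[OF assms] by blast
    have "(\<Sum>v\<in>V. if v \<in> e then 1 else (0::nat)) = card (V \<inter> e)"
      using fV by (simp add: sum.If_cases)
    also have "V \<inter> e = {u,w}" using e by auto
    finally show "(\<Sum>v\<in>V. if v \<in> e then 1 else (0::nat)) = 2" using e by simp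
  qed simp
  finally show ?thesis by simp
qed


lemma split_J:
  assumes sg: "simple_graph V E" and P: "part V P" and X: "X \<in> P"
    and S: "S \<subseteq> X" "S \<noteq> {}" "S \<noteq> X"
    and T_def: "T = X - S" and P'_def: "P' = insert S (insert T (P - {X}))"
  shows "part V P'" and "Jf \<phi> E P' = Jf \<phi> E P + real (card (cut_edges (ind E X) S T))
     + 2*\<phi>*(gx (vol E S) + gx (vol E T) - gx (vol E X))
     + \<phi>/4*(vol E S * ln (card S) + vol E T * ln (card T) - vol E X * ln (card X))"
proof -
  have fV: "finite V" using sg unfolding simple_graph_def by blast
  have fP: "finite P" using part_finite[OF fV P] .
  have XV: "X \<subseteq> V" and Xne: "X \<noteq> {}" using P X unfolding part_def by auto
  have fX: "finite X" using XV fV finite_subset by blast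
  have fE: "finite E" using sg_finite[OF sg] .
  have Tne: "T \<noteq> {}" using S unfolding T_def by blast
  have ST: "S \<noteq> T" using S unfolding T_def by blast
  have disjX: "\<And>Y. Y \<in> P \<Longrightarrow> Y \<noteq> X \<Longrightarrow> X \<inter> Y = {}" using P X unfolding part_def by blast
  have Sn: "S \<notin> P - {X}" using disjX S by blast
  have Tn: "T \<notin> P - {X}" using disjX Tne unfolding T_def by blast
  have pP: "\<forall>X\<in>P. X \<noteq> {} \<and> X \<subseteq> V" "\<Union>P = V"
     "\<forall>X\<in>P. \<forall>Y\<in>P. X \<noteq> Y \<longrightarrow> X \<inter> Y = {}" using P unfolding part_def by auto
  have a1: "\<forall>Y\<in>P'. Y \<noteq> {} \<and> Y \<subseteq> V" using pP(1) S Tne XV unfolding P'_def T_def by auto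
  have "\<Union>P' = S \<union> T \<union> \<Union>(P - {X})" unfolding P'_def by auto
  also have "\<dots> = X \<union> \<Union>(P - {X})" using S(1) unfolding T_def by auto
  also have "\<dots> = \<Union>P" using X by auto
  finally have a2: "\<Union>P' = V" using pP(2) by simp
  have a3: "\<forall>Y\<in>P'. \<forall>Z\<in>P'. Y \<noteq> Z \<longrightarrow> Y \<inter> Z = {}"
  proof (intro ballI impI)
    fix Y Z assume Y: "Y \<in> P'" and Z: "Z \<in> P'" and YZ: "Y \<noteq> Z"
    have sub: "\<And>W. W \<in> P' \<Longrightarrow> (W \<subseteq> X) \<or> (W \<in> P \<and> W \<noteq> X)" unfolding P'_def T_def using S by auto
    show "Y \<inter> Z = {}"
    proof (cases "Y \<subseteq> X")
      case True
      show ?thesis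
      proof (cases "Z \<subseteq> X")
        case True
        have inST: "W = S \<or> W = T" if W: "W \<in> P'" "W \<subseteq> X" for W
        proof (rule ccontr)
          assume "\<not> (W = S \<or> W = T)"
          then have "W \<in> P" "W \<noteq> X" using W(1) unfolding P'_def by auto
          then have "X \<inter> W = {}" "W \<noteq> {}" using disjX pP(1) by auto
          then show False using W(2) by blast
        qed
        then have "Y \<in> {S,T}" "Z \<in> {S,T}" using \<open>Y \<subseteq> X\<close> True Y Z by auto
        then show ?thesis using YZ unfolding T_def by auto
      next
        case False
        then have "Z \<in> P" "Z \<noteq> X" using sub[OF Z] by auto
        then show ?thesis using disjX \<open>Y \<subseteq> X\<close> by blast
      qed
    next
      case False
      then have Y2: "Y \<in> P" "Y \<noteq> X" using sub[OF Y] by auto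
      show ?thesis
      proof (cases "Z \<subseteq> X")
        case True
        then show ?thesis using disjX Y2 by blast
      next
        case False
        then have "Z \<in> P" "Z \<noteq> X" using sub[OF Z] by auto
        then show ?thesis using pP(3) Y2 YZ by blast
      qed
    qed
  qed
  show "part V P'" unfolding part_def using a1 a2 a3 by blast
  have sumP': "sum h P' = h S + h T + sum h (P - {X})" for h :: "'a set \<Rightarrow> real"
    unfolding P'_def using fP Sn Tn ST by simp
  have sumP: "sum h P = h X + sum h (P - {X})" for h :: "'a set \<Rightarrow> real"
    using fP X by (simp add: sum.remove)
  have edge2: "\<And>e. e \<in> E \<Longrightarrow> e \<noteq> {}" using sg_edge[OF sg] by blast
  have cr: "crossE E P' = crossE E P \<union> cut_edges (ind E X) S T"
  proof (intro set_eqI iffI)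
    fix e assume e: "e \<in> crossE E P'"
    then have eE: "e \<in> E" and nS: "\<not> e \<subseteq> S" and nT: "\<not> e \<subseteq> T"
      and nY: "\<And>Y. Y \<in> P \<Longrightarrow> Y \<noteq> X \<Longrightarrow> \<not> e \<subseteq> Y"
      unfolding crossE_def ind_def P'_def by auto
    show "e \<in> crossE E P \<union> cut_edges (ind E X) S T"
    proof (cases "e \<subseteq> X")
      case True
      then show ?thesis using eE nS nT unfolding cut_edges_def ind_def T_def by blast
    next
      case False
      then show ?thesis using eE nY unfolding crossE_def ind_def by blast
    qed
  next
    fix e assume e: "e \<in> crossE E P \<union> cut_edges (ind E X) S T"
    show "e \<in> crossE E P'"
    proof (cases "e \<in> crossE E P")
      case True
      then have "e \<in> E" "\<And>Y. Y \<in> P \<Longrightarrow> \<not> e \<subseteq> Y" unfolding crossE_def ind_def by auto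
      moreover have "\<not> e \<subseteq> S" "\<not> e \<subseteq> T" using calculation(2)[OF X] S unfolding T_def by auto
      ultimately show ?thesis unfolding crossE_def ind_def P'_def by auto
    next
      case False
      then have c: "e \<in> cut_edges (ind E X) S T" using e by blast
      then have eE: "e \<in> E" and eX: "e \<subseteq> X" and m: "e \<inter> S \<noteq> {}" "e \<inter> T \<noteq> {}"
        unfolding cut_edges_def ind_def by auto
      have "\<not> e \<subseteq> S" using m unfolding T_def by blast
      moreover have "\<not> e \<subseteq> T" using m unfolding T_def by blast
      moreover have "\<not> e \<subseteq> Y" if "Y \<in> P" "Y \<noteq> X" for Y using disjX[OF that] eX m by blast
      ultimately show ?thesis using eE unfolding crossE_def ind_def P'_def by auto
    qed
  qed
  have dj: "crossE E P \<inter> cut_edges (ind E X) S T = {}"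
    unfolding crossE_def cut_edges_def ind_def using X by blast
  have fin1: "finite (crossE E P)" using fE unfolding crossE_def by simp
  have fin2: "finite (cut_edges (ind E X) S T)" using fE unfolding cut_edges_def ind_def by simp
  have cardc: "card (crossE E P') = card (crossE E P) + card (cut_edges (ind E X) S T)"
    unfolding cr using card_Un_disjoint[OF fin1 fin2 dj] .
  have vX: "vol E X = vol E S + vol E T" unfolding T_def using vol_union[OF fX S(1)] .
  show "Jf \<phi> E P' = Jf \<phi> E P + real (card (cut_edges (ind E X) S T))
     + 2*\<phi>*(gx (vol E S) + gx (vol E T) - gx (vol E X))
     + \<phi>/4*(vol E S * ln (card S) + vol E T * ln (card T) - vol E X * ln (card X))"
    unfolding Jf_def cardc sumP'[of "\<lambda>X. gx (real (vol E X))"] sumP[of "\<lambda>X. gx (real (vol E X))"]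
      sumP'[of "\<lambda>X. real (vol E X) * ln (real (card X))"] sumP[of "\<lambda>X. real (vol E X) * ln (real (card X))"]
    by (simp add: algebra_simps)
qed


lemma vol_empty: "vol F {} = 0" unfolding vol_def by simp

lemma min_expander:
  assumes sg: "simple_graph V E" and P: "part V P" and X: "X \<in> P" and phi: "\<phi> > 0"
    and mn: "\<And>Q. part V Q \<Longrightarrow> Jf \<phi> E P \<le> Jf \<phi> E Q"
  shows "is_expander \<phi> X (ind E X)"
  unfolding is_expander_def
proof (intro allI impI)
  fix S assume SX: "S \<subseteq> X"
  have fV: "finite V" using sg unfolding simple_graph_def by (rule conjunct1)
  have XV: "X \<subseteq> V" using P X unfolding part_def by blast
  have fX: "finite X" using XV fV finite_subset by blast
  have fE: "finite E" using sg_finite[OF sg] .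
  show "\<phi> * real (min (vol (ind E X) S) (vol (ind E X) (X - S))) \<le> real (card (cut_edges (ind E X) S (X - S)))"
  proof (cases "S = {} \<or> S = X")
    case True
    then have "min (vol (ind E X) S) (vol (ind E X) (X - S)) = 0" by (auto simp: vol_empty)
    then show ?thesis by simp
  next
    case False
    define T where "T = X - S"
    define P' where "P' = insert S (insert T (P - {X}))"
    have Sne: "S \<noteq> {}" "S \<noteq> X" using False by auto
    have pP': "part V P'" using split_J(1)[OF sg P X SX Sne T_def P'_def] .
    have eq: "Jf \<phi> E P' = Jf \<phi> E P + real (card (cut_edges (ind E X) S T))
     + 2*\<phi>*(gx (vol E S) + gx (vol E T) - gx (vol E X))
     + \<phi>/4*(vol E S * ln (card S) + vol E T * ln (card T) - vol E X * ln (card X))"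
      using split_J(2)[OF sg P X SX Sne T_def P'_def] .
    have le: "Jf \<phi> E P \<le> Jf \<phi> E P'" using mn[OF pP'] .
    have vX: "real (vol E X) = real (vol E S) + real (vol E T)"
      using vol_union[OF fX SX] unfolding T_def by simp
    have g: "gx (vol E S) + gx (vol E T) + ln 2 * min (real (vol E S)) (real (vol E T)) \<le> gx (vol E X)"
      using gx_split[of "real (vol E S)" "real (vol E T)"] vX by simp
    have cS: "card S \<ge> 1" using Sne fX SX by (metis One_nat_def Suc_leI card_gt_0_iff finite_subset)
    have cT: "card T \<ge> 1" using Sne fX SX unfolding T_def
      by (metis Diff_eq_empty_iff One_nat_def Suc_leI card_gt_0_iff finite_Diff subset_antisym)
    have cSX: "card S \<le> card X" using card_mono[OF fX SX] .
    have cTX: "card T \<le> card X" using card_mono[OF fX] unfolding T_def by blast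
    have l1: "ln (real (card S)) \<le> ln (real (card X))" using cS cSX by simp
    have l2: "ln (real (card T)) \<le> ln (real (card X))" using cT cTX by simp
    have d2: "vol E S * ln (card S) + vol E T * ln (card T) - vol E X * ln (card X) \<le> 0"
    proof -
      have "real (vol E S) * ln (card S) \<le> real (vol E S) * ln (card X)" using l1 by (simp add: mult_left_mono)
      moreover have "real (vol E T) * ln (card T) \<le> real (vol E T) * ln (card X)" using l2 by (simp add: mult_left_mono)
      ultimately show ?thesis using vX by (simp add: algebra_simps)
    qed
    have "0 \<le> real (card (cut_edges (ind E X) S T))
     + 2*\<phi>*(gx (vol E S) + gx (vol E T) - gx (vol E X))
     + \<phi>/4*(vol E S * ln (card S) + vol E T * ln (card T) - vol E X * ln (card X))"
      using le eq by linarith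
    moreover have "\<phi>/4*(vol E S * ln (card S) + vol E T * ln (card T) - vol E X * ln (card X)) \<le> 0"
      using d2 phi by (simp add: mult_nonneg_nonpos)
    moreover have "2*\<phi>*(gx (vol E S) + gx (vol E T) - gx (vol E X)) \<le> 2*\<phi>*(- ln 2 * min (real (vol E S)) (real (vol E T)))"
      using g phi by (intro mult_left_mono) auto
    ultimately have c1: "2*\<phi>*(ln 2 * min (real (vol E S)) (real (vol E T))) \<le> real (card (cut_edges (ind E X) S T))"
      by linarith
    have m0: "min (real (vol E S)) (real (vol E T)) \<ge> 0" by simp
    have "\<phi> * min (real (vol E S)) (real (vol E T)) \<le> 2*\<phi>*(ln 2 * min (real (vol E S)) (real (vol E T)))"
    proof -
      have "1 \<le> 2 * ln (2::real)" using ln2_ge by simp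
      then have "min (real (vol E S)) (real (vol E T)) \<le> (2 * ln 2) * min (real (vol E S)) (real (vol E T))"
        using m0 by (metis mult_1 mult_right_mono)
      then show ?thesis using phi by (simp add: mult_left_mono algebra_simps)
    qed
    moreover have "real (min (vol (ind E X) S) (vol (ind E X) (X - S))) \<le> min (real (vol E S)) (real (vol E T))"
      using vol_ind_le[OF fE, of X S] vol_ind_le[OF fE, of X "X - S"] unfolding T_def by linarith
    ultimately show ?thesis using c1 phi unfolding T_def
      by (smt (verit, best) mult_left_mono)
  qed
qed


lemma min_wr:
  assumes sg: "simple_graph V E" and P: "part V P" and X: "X \<in> P" and phi: "\<phi> > 0"
    and mn: "\<And>Q. part V Q \<Longrightarrow> Jf \<phi> E P \<le> Jf \<phi> E Q"
  shows "weakly_regular (\<phi>/4) X (ind E X)"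
  unfolding weakly_regular_def
proof
  fix u assume uX: "u \<in> X"
  have fV: "finite V" using sg unfolding simple_graph_def by (rule conjunct1)
  have XV: "X \<subseteq> V" using P X unfolding part_def by blast
  have fX: "finite X" using XV fV finite_subset by blast
  have fE: "finite E" using sg_finite[OF sg] .
  have cX1: "card X \<ge> 1" using uX fX by (metis One_nat_def Suc_leI card_gt_0_iff empty_iff)
  show "\<phi> / 4 * (real (\<Sum>w\<in>X. deg (ind E X) w) / real (card X)) \<le> real (deg (ind E X) u)"
  proof (cases "card X = 1")
    case True
    then obtain z where Xz: "X = {z}" using card_1_singletonE by blast
    have "ind E X = {}"
    proof (rule ccontr)
      assume "ind E X \<noteq> {}"
      then obtain e where "e \<in> E" "e \<subseteq> X" unfolding ind_def by blast
      moreover obtain a b where "e = {a,b}" "a \<noteq> b" using sg_edge[OF sg \<open>e \<in> E\<close>] by blast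
      ultimately show False using Xz by auto
    qed
    then show ?thesis unfolding deg_def by simp
  next
    case False
    then have cX2: "card X \<ge> 2" using cX1 by simp
    define S where "S = {u}"
    define T where "T = X - S"
    define P' where "P' = insert S (insert T (P - {X}))"
    have SX: "S \<subseteq> X" using uX unfolding S_def by simp
    have Sne: "S \<noteq> {}" "S \<noteq> X" using cX2 unfolding S_def by auto
    have pP': "part V P'" using split_J(1)[OF sg P X SX Sne T_def P'_def] .
    have eq: "Jf \<phi> E P' = Jf \<phi> E P + real (card (cut_edges (ind E X) S T))
     + 2*\<phi>*(gx (vol E S) + gx (vol E T) - gx (vol E X))
     + \<phi>/4*(vol E S * ln (card S) + vol E T * ln (card T) - vol E X * ln (card X))"
      using split_J(2)[OF sg P X SX Sne T_def P'_def] .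
    have le: "Jf \<phi> E P \<le> Jf \<phi> E P'" using mn[OF pP'] .
    have vX: "real (vol E X) = real (vol E S) + real (vol E T)"
      using vol_union[OF fX SX] unfolding T_def by simp
    have g: "gx (vol E S) + gx (vol E T) + ln 2 * min (real (vol E S)) (real (vol E T)) \<le> gx (vol E X)"
      using gx_split[of "real (vol E S)" "real (vol E T)"] vX by simp
    have "0 \<le> ln 2 * min (real (vol E S)) (real (vol E T))" by simp
    then have "gx (vol E S) + gx (vol E T) - gx (vol E X) \<le> 0" using g by linarith
    then have g2: "2*\<phi>*(gx (vol E S) + gx (vol E T) - gx (vol E X)) \<le> 0"
      using phi by (intro mult_nonneg_nonpos) auto
    have cut: "cut_edges (ind E X) S T = {e \<in> ind E X. u \<in> e}"
    proof (intro set_eqI iffI)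
      fix e assume "e \<in> cut_edges (ind E X) S T"
      then show "e \<in> {e \<in> ind E X. u \<in> e}" unfolding cut_edges_def S_def by auto
    next
      fix e assume e: "e \<in> {e \<in> ind E X. u \<in> e}"
      then have "e \<in> E" "e \<subseteq> X" "u \<in> e" unfolding ind_def by auto
      moreover obtain a b where "e = {a,b}" "a \<noteq> b" using sg_edge[OF sg \<open>e \<in> E\<close>] by blast
      ultimately have "e \<inter> T \<noteq> {}" unfolding T_def S_def by auto
      then show "e \<in> cut_edges (ind E X) S T" using e unfolding cut_edges_def S_def by auto
    qed
    have cutc: "card (cut_edges (ind E X) S T) = deg (ind E X) u" unfolding cut deg_def ..
    have cS: "card S = 1" unfolding S_def by simp
    have cT: "card T = card X - 1" unfolding T_def S_def using uX fX by simp
    define x where "x = real (card X)"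
    have x2: "x \<ge> 2" unfolding x_def using cX2 by simp
    have cTr: "real (card T) = x - 1" unfolding x_def using cT cX2 by simp
    have main: "real (deg (ind E X) u) \<ge> \<phi>/4 * (vol E X * ln x - vol E T * ln (x - 1))"
      using le eq g2 cutc cS cTr unfolding x_def by (simp add: algebra_simps)
    have ld: "ln x - ln (x - 1) \<ge> 1/x" using ln_diff_ge[OF x2] .
    have lx: "ln x \<ge> 1/x" using ld x2 by (smt (verit) ln_ge_zero)
    have "vol E X * ln x - vol E T * ln (x - 1) = vol E S * ln x + vol E T * (ln x - ln (x - 1))"
      using vX by (simp add: algebra_simps)
    also have "\<dots> \<ge> vol E S * (1/x) + vol E T * (1/x)"
      using lx ld by (intro add_mono mult_left_mono) auto
    finally have f1: "vol E X * ln x - vol E T * ln (x - 1) \<ge> vol E S * (1/x) + vol E T * (1/x)" .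
    have "real (vol E X) / x = vol E S * (1/x) + vol E T * (1/x)" using vX by (simp add: add_divide_distrib)
    then have "vol E X * ln x - vol E T * ln (x - 1) \<ge> vol E X / x" using f1 by linarith
    moreover have "(\<Sum>w\<in>X. deg (ind E X) w) \<le> vol E X"
      using vol_ind_le[OF fE, of X X] unfolding vol_def .
    then have "real (\<Sum>w\<in>X. deg (ind E X) w) \<le> real (vol E X)" by (simp only: of_nat_le_iff)
    then have "real (\<Sum>w\<in>X. deg (ind E X) w) / x \<le> vol E X / x" using x2 by (simp add: divide_right_mono)
    ultimately have "real (\<Sum>w\<in>X. deg (ind E X) w) / x \<le> vol E X * ln x - vol E T * ln (x - 1)" by linarith
    then have "\<phi>/4 * (real (\<Sum>w\<in>X. deg (ind E X) w) / x) \<le> \<phi>/4 * (vol E X * ln x - vol E T * ln (x - 1))"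
      using phi by (intro mult_left_mono) auto
    then show ?thesis using main unfolding x_def by linarith
  qed
qed


lemma card_E_le: assumes sg: "simple_graph V E" shows "card E \<le> card V * card V"
proof -
  have fV: "finite V" using sg unfolding simple_graph_def by (rule conjunct1)
  have "E \<subseteq> (\<lambda>p. {fst p, snd p}) ` (V \<times> V)"
  proof
    fix e assume "e \<in> E"
    then obtain u v where "e = {u,v}" "u \<in> V" "v \<in> V" using sg_edge[OF sg] by blast
    then show "e \<in> (\<lambda>p. {fst p, snd p}) ` (V \<times> V)" by (intro image_eqI[where x="(u,v)"]) auto
  qed
  then have "card E \<le> card ((\<lambda>p. {fst p, snd p}) ` (V \<times> V))" using fV by (intro card_mono) auto
  also have "\<dots> \<le> card (V \<times> V)" by (rule card_image_le) (use fV in simp)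
  finally show ?thesis by (simp add: card_cartesian_product)
qed

lemma ln_nat_nonneg: "ln (real (n::nat)) \<ge> 0"
  by (cases "n = 0") auto

lemma round:
  assumes sg: "simple_graph V E" and n2: "card V \<ge> 2"
    and phi: "\<phi> = (1/32) / ln (real (card V))"
  shows "\<exists>P. part V P \<and> 2 * card (crossE E P) \<le> card E \<and>
     (\<forall>X\<in>P. weakly_regular (\<phi>/4) X (ind E X) \<and> is_expander \<phi> X (ind E X))"
proof -
  have fV: "finite V" using sg unfolding simple_graph_def by (rule conjunct1)
  have fE: "finite E" using sg_finite[OF sg] .
  have Vne: "V \<noteq> {}" using n2 by auto
  define n where "n = real (card V)"
  have n2r: "n \<ge> 2" unfolding n_def using n2 by simp
  have lnpos: "ln n > 0" using n2r by simp
  have phipos: "\<phi> > 0" unfolding phi n_def[symmetric] using lnpos by simp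
  have philn: "\<phi> * ln n = 1/32" unfolding phi n_def[symmetric] using lnpos by simp
  define Parts where "Parts = {P. part V P}"
  have "Parts \<subseteq> Pow (Pow V)"
  proof
    fix Q assume "Q \<in> Parts"
    then have "\<forall>X\<in>Q. X \<noteq> {} \<and> X \<subseteq> V" unfolding Parts_def part_def by simp
    then show "Q \<in> Pow (Pow V)" by auto
  qed
  then have fin: "finite Parts" using fV by (simp add: finite_subset)
  have VP: "{V} \<in> Parts" unfolding Parts_def part_def using Vne by simp
  then have ne: "Parts \<noteq> {}" by blast
  define P where "P = arg_min_on (Jf \<phi> E) Parts"
  have PP: "P \<in> Parts" unfolding P_def using arg_min_if_finite(1)[OF fin ne] .
  have pP: "part V P" using PP unfolding Parts_def by simp
  have mn: "Jf \<phi> E P \<le> Jf \<phi> E Q" if "part V Q" for Q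
    unfolding P_def by (rule arg_min_least[OF fin ne]) (use that in \<open>simp add: Parts_def\<close>)
  define m where "m = card E"
  have s1: "0 \<le> (\<Sum>X\<in>P. gx (real (vol E X)))" by (intro sum_nonneg gx_nonneg)
  have s2: "0 \<le> (\<Sum>X\<in>P. real (vol E X) * ln (real (card X)))"
    by (intro sum_nonneg mult_nonneg_nonneg ln_nat_nonneg) simp
  have "real (card (crossE E P)) \<le> Jf \<phi> E P"
    unfolding Jf_def using s1 s2 phipos by simp
  also have "\<dots> \<le> Jf \<phi> E {V}" using mn VP unfolding Parts_def by simp
  also have "Jf \<phi> E {V} = 2*\<phi>*gx (real (vol E V)) + \<phi>/4 * (real (vol E V) * ln n)"
  proof -
    have "crossE E {V} = {}"
    proof -
      have "e \<in> ind E V" if eE: "e \<in> E" for e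
      proof -
        obtain u v where "e = {u,v}" "u \<in> V" "v \<in> V" using sg_edge[OF sg eE] by blast
        then show ?thesis using eE unfolding ind_def by simp
      qed
      then show ?thesis unfolding crossE_def by blast
    qed
    then show ?thesis unfolding Jf_def n_def by simp
  qed
  also have "\<dots> \<le> 2*\<phi>*(2 * m * (3 * ln n)) + \<phi>/4 * (2 * m * ln n)"
  proof -
    have vV: "real (vol E V) = 2 * m" unfolding m_def using handshake[OF sg] by simp
    have "gx (2 * m) \<le> 2 * m * (3 * ln n)"
    proof (cases "m = 0")
      case True then show ?thesis unfolding gx_def by simp
    next
      case False
      have "card E \<le> card V * card V" by (rule card_E_le[OF sg])
      then have "real m \<le> n * n" unfolding m_def n_def by (metis of_nat_le_iff of_nat_mult)
      moreover have "2 * (n * n) \<le> n * (n * n)" using n2r by (intro mult_right_mono) auto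
      ultimately have "2 * real m \<le> n * n * n" by (simp add: mult.assoc)
      moreover have "2 * real m > 0" using False by simp
      ultimately have "ln (2 * real m) \<le> ln (n * n * n)" by simp
      also have "ln (n * n * n) = 3 * ln n" using n2r by (simp add: ln_mult)
      finally have "ln (2 * real m) \<le> 3 * ln n" .
      then show ?thesis unfolding gx_def by (intro mult_left_mono) auto
    qed
    then show ?thesis unfolding vV using phipos lnpos
      by (intro add_mono mult_left_mono) auto
  qed
  also have "\<dots> = (25/2) * (\<phi> * ln n) * m" by (simp add: algebra_simps)
  also have "\<dots> = (25/64) * m" unfolding philn by simp
  finally have "real (card (crossE E P)) \<le> (25/64) * m" .
  then have "2 * card (crossE E P) \<le> card E" unfolding m_def by linarith
  moreover have "\<forall>X\<in>P. weakly_regular (\<phi>/4) X (ind E X) \<and> is_expander \<phi> X (ind E X)"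
    using min_wr[OF sg pP _ phipos mn] min_expander[OF sg pP _ phipos mn] by blast
  ultimately show ?thesis using pP by blast
qed


lemma ind_disj:
  assumes sg: "simple_graph V E" and d: "X \<inter> Y = {}"
  shows "ind E X \<inter> ind E Y = {}"
proof (rule ccontr)
  assume "ind E X \<inter> ind E Y \<noteq> {}"
  then obtain e where e: "e \<in> E" "e \<subseteq> X" "e \<subseteq> Y" unfolding ind_def by blast
  obtain u v where "e = {u,v}" using sg_edge[OF sg e(1)] by blast
  then show False using e d by blast
qed

definition goodD :: "'a set \<Rightarrow> real \<Rightarrow> nat \<Rightarrow> 'a set set \<Rightarrow> nat \<Rightarrow> (nat \<Rightarrow> 'a set) \<Rightarrow> (nat \<Rightarrow> 'a set set) \<Rightarrow> bool" where
  "goodD V \<phi> t E k Vs Es \<longleftrightarrow>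
       (\<forall>i<k. Vs i \<subseteq> V \<and> simple_graph (Vs i) (Es i)) \<and>
       (\<forall>i<k. \<forall>j<k. i \<noteq> j \<longrightarrow> Es i \<inter> Es j = {}) \<and>
       (\<Union>i<k. Es i) = E \<and>
       (\<forall>v\<in>V. card {i. i < k \<and> v \<in> Vs i} \<le> t) \<and>
       (\<forall>i<k. weakly_regular (\<phi> / 4) (Vs i) (Es i) \<and> is_expander \<phi> (Vs i) (Es i))"

lemma decomp:
  assumes n2: "card V \<ge> 2" and phi: "\<phi> = (1/32) / ln (real (card V))"
  shows "simple_graph V E \<Longrightarrow> card E < 2^t \<Longrightarrow> \<exists>k Vs Es. goodD V \<phi> t E k Vs Es"
proof (induction t arbitrary: E)
  case 0
  then have "E = {}" using sg_finite[OF 0(1)] by simp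
  then show ?case unfolding goodD_def by (intro exI[where x=0]) simp
next
  case (Suc t)
  note sg = Suc.prems(1)
  have fV: "finite V" using sg unfolding simple_graph_def by (rule conjunct1)
  obtain P where pP: "part V P" and cr: "2 * card (crossE E P) \<le> card E"
    and good: "\<forall>X\<in>P. weakly_regular (\<phi>/4) X (ind E X) \<and> is_expander \<phi> X (ind E X)"
    using round[OF sg n2 phi] by blast
  define E' where "E' = crossE E P"
  have E'E: "E' \<subseteq> E" unfolding E'_def crossE_def by blast
  have sg': "simple_graph V E'" using sg_sub[OF sg E'E] .
  have "card E < 2 * 2^t" using Suc.prems(2) by simp
  then have "card E' < 2^t" using cr unfolding E'_def by linarith
  from Suc.IH[OF sg' this] obtain k Vs Es where hh: "goodD V \<phi> t E' k Vs Es" by blast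
  note hh' = hh[unfolded goodD_def]
  have h1: "\<forall>i<k. Vs i \<subseteq> V \<and> simple_graph (Vs i) (Es i)" using hh' by (rule conjunct1)
  have h2: "\<forall>i<k. \<forall>j<k. i \<noteq> j \<longrightarrow> Es i \<inter> Es j = {}" using hh'[THEN conjunct2] by (rule conjunct1)
  have h3: "(\<Union>i<k. Es i) = E'" using hh'[THEN conjunct2, THEN conjunct2] by (rule conjunct1)
  have h4: "\<forall>v\<in>V. card {i. i < k \<and> v \<in> Vs i} \<le> t" using hh'[THEN conjunct2, THEN conjunct2, THEN conjunct2] by (rule conjunct1)
  have h5: "\<forall>i<k. weakly_regular (\<phi> / 4) (Vs i) (Es i) \<and> is_expander \<phi> (Vs i) (Es i)"
    using hh'[THEN conjunct2, THEN conjunct2, THEN conjunct2] by (rule conjunct2)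
  have fP: "finite P" using part_finite[OF fV pP] .
  obtain f where bij: "bij_betw f {0..<card P} P" using ex_bij_betw_nat_finite[OF fP] by blast
  define p where "p = card P"
  have fP': "\<And>i. i < p \<Longrightarrow> f i \<in> P" using bij unfolding p_def bij_betw_def by auto
  have finj: "\<And>i j. i < p \<Longrightarrow> j < p \<Longrightarrow> f i = f j \<Longrightarrow> i = j"
    using bij unfolding p_def bij_betw_def inj_on_def by auto
  have fsurj: "\<exists>i<p. f i = X" if XP: "X \<in> P" for X
  proof -
    have "X \<in> f ` {0..<card P}" using bij XP unfolding bij_betw_def by simp
    then obtain i where "i \<in> {0..<card P}" "X = f i" by (rule imageE)
    then show ?thesis unfolding p_def by auto
  qed
  have PV: "\<And>X. X \<in> P \<Longrightarrow> X \<subseteq> V" using pP unfolding part_def by blast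
  have Pdisj: "\<And>X Y. X \<in> P \<Longrightarrow> Y \<in> P \<Longrightarrow> X \<noteq> Y \<Longrightarrow> X \<inter> Y = {}" using pP unfolding part_def by blast
  define Vs2 where "Vs2 i = (if i < p then f i else Vs (i - p))" for i
  define Es2 where "Es2 i = (if i < p then ind E (f i) else Es (i - p))" for i
  have EsE': "\<And>j. j < k \<Longrightarrow> Es j \<subseteq> E'" using h3 by blast
  have p1: "\<forall>i<p+k. Vs2 i \<subseteq> V \<and> simple_graph (Vs2 i) (Es2 i)"
  proof (intro allI impI)
    fix i assume i: "i < p + k"
    show "Vs2 i \<subseteq> V \<and> simple_graph (Vs2 i) (Es2 i)"
    proof (cases "i < p")
      case True
      then show ?thesis unfolding Vs2_def Es2_def using PV[OF fP'[OF True]] sg_ind[OF sg] by simp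
    next
      case False
      then show ?thesis unfolding Vs2_def Es2_def using h1 i by simp
    qed
  qed
  have p2: "\<forall>i<p+k. \<forall>j<p+k. i \<noteq> j \<longrightarrow> Es2 i \<inter> Es2 j = {}"
  proof (intro allI impI)
    fix i j assume i: "i < p + k" and j: "j < p + k" and ij: "i \<noteq> j"
    have mix: "ind E (f a) \<inter> Es b = {}" if "a < p" "b < k" for a b
    proof -
      have "ind E (f a) \<subseteq> (\<Union>X\<in>P. ind E X)" using fP'[OF that(1)] by blast
      moreover have "Es b \<subseteq> E - (\<Union>X\<in>P. ind E X)" using EsE'[OF that(2)] unfolding E'_def crossE_def .
      ultimately show ?thesis by blast
    qed
    show "Es2 i \<inter> Es2 j = {}"
    proof (cases "i < p")
      case True
      show ?thesis
      proof (cases "j < p")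
        case True
        have "f i \<noteq> f j" using finj \<open>i < p\<close> True ij by blast
        then have "f i \<inter> f j = {}" using Pdisj[OF fP'[OF \<open>i < p\<close>] fP'[OF True]] by simp
        then show ?thesis unfolding Es2_def using \<open>i < p\<close> True ind_disj[OF sg] by simp
      next
        case False
        then show ?thesis unfolding Es2_def using \<open>i < p\<close> mix[of i "j - p"] j by simp
      qed
    next
      case False
      show ?thesis
      proof (cases "j < p")
        case True
        then show ?thesis unfolding Es2_def using False mix[of j "i - p"] i by (simp add: Int_commute)
      next
        case False
        then show ?thesis unfolding Es2_def using \<open>\<not> i < p\<close> h2 i j ij by simp
      qed
    qed
  qed
  have p3: "(\<Union>i<p+k. Es2 i) = E"
  proof
    show "(\<Union>i<p+k. Es2 i) \<subseteq> E"
    proof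
      fix e assume "e \<in> (\<Union>i<p+k. Es2 i)"
      then obtain i where i: "i < p + k" "e \<in> Es2 i" by blast
      show "e \<in> E"
      proof (cases "i < p")
        case True then show ?thesis using i unfolding Es2_def ind_def by simp
      next
        case False
        then have ik: "i - p < k" using i(1) by simp
        have "e \<in> Es (i - p)" using i(2) False unfolding Es2_def by simp
        then have "e \<in> E'" using EsE'[OF ik] by blast
        then show ?thesis using E'E by blast
      qed
    qed
  next
    show "E \<subseteq> (\<Union>i<p+k. Es2 i)"
    proof
      fix e assume eE: "e \<in> E"
      show "e \<in> (\<Union>i<p+k. Es2 i)"
      proof (cases "e \<in> E'")
        case True
        then obtain j where j: "j < k" "e \<in> Es j" using h3 by blast
        then have "e \<in> Es2 (j + p)" "j + p < p + k" unfolding Es2_def by auto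
        then show ?thesis by blast
      next
        case False
        then obtain X where X: "X \<in> P" "e \<in> ind E X" using eE unfolding E'_def crossE_def by blast
        then obtain i where i: "i < p" "f i = X" using fsurj by blast
        then have "e \<in> Es2 i" "i < p + k" using X unfolding Es2_def by auto
        then show ?thesis by blast
      qed
    qed
  qed
  have p4: "\<forall>v\<in>V. card {i. i < p + k \<and> v \<in> Vs2 i} \<le> Suc t"
  proof
    fix v assume vV: "v \<in> V"
    define A where "A = {i. i < p \<and> v \<in> f i}"
    define B where "B = {j. j < k \<and> v \<in> Vs j}"
    have sub: "{i. i < p + k \<and> v \<in> Vs2 i} \<subseteq> A \<union> (\<lambda>j. j + p) ` B"
    proof
      fix i assume "i \<in> {i. i < p + k \<and> v \<in> Vs2 i}"
      then have i: "i < p + k" "v \<in> Vs2 i" by auto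
      show "i \<in> A \<union> (\<lambda>j. j + p) ` B"
      proof (cases "i < p")
        case True then show ?thesis using i unfolding A_def Vs2_def by simp
      next
        case False
        then have "i - p \<in> B" "i = (i - p) + p" using i unfolding B_def Vs2_def by auto
        then show ?thesis by blast
      qed
    qed
    have fA: "finite A" unfolding A_def by simp
    have fB: "finite B" unfolding B_def by simp
    have cA: "card A \<le> 1"
    proof -
      have "\<forall>a1\<in>A. \<forall>a2\<in>A. a1 = a2"
      proof (intro ballI)
        fix a1 a2 assume "a1 \<in> A" "a2 \<in> A"
        then have a: "a1 < p" "a2 < p" "v \<in> f a1" "v \<in> f a2" unfolding A_def by auto
        have "f a1 = f a2"
        proof (rule ccontr)
          assume "f a1 \<noteq> f a2"
          then have "f a1 \<inter> f a2 = {}" using Pdisj[OF fP'[OF a(1)] fP'[OF a(2)]] by simp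
          then show False using a(3,4) by blast
        qed
        then show "a1 = a2" using finj a by blast
      qed
      then show ?thesis using card_le_Suc0_iff_eq[OF fA] by simp
    qed
    have "card B \<le> t" using h4 vV unfolding B_def by blast
    then have cB: "card ((\<lambda>j. j + p) ` B) \<le> t"
      using card_image_le[OF fB, of "\<lambda>j. j + p"] by linarith
    have "card {i. i < p + k \<and> v \<in> Vs2 i} \<le> card (A \<union> (\<lambda>j. j + p) ` B)"
      using fA fB by (intro card_mono[OF _ sub]) auto
    also have "\<dots> \<le> card A + card ((\<lambda>j. j + p) ` B)" by (rule card_Un_le)
    finally show "card {i. i < p + k \<and> v \<in> Vs2 i} \<le> Suc t" using cA cB by simp
  qed
  have p5: "\<forall>i<p+k. weakly_regular (\<phi> / 4) (Vs2 i) (Es2 i) \<and> is_expander \<phi> (Vs2 i) (Es2 i)"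
  proof (intro allI impI)
    fix i assume i: "i < p + k"
    show "weakly_regular (\<phi> / 4) (Vs2 i) (Es2 i) \<and> is_expander \<phi> (Vs2 i) (Es2 i)"
    proof (cases "i < p")
      case True then show ?thesis unfolding Vs2_def Es2_def using good fP' by simp
    next
      case False then show ?thesis unfolding Vs2_def Es2_def using h5 i by simp
    qed
  qed
  show ?case
    unfolding goodD_def
    apply (rule exI[where x="p+k"])
    apply (rule exI[where x=Vs2])
    apply (rule exI[where x=Es2])
    using p1 p2 p3 p4 p5 by (intro conjI)
qed


lemma t_bound:
  assumes n2: "card V \<ge> 2" and s: "2^s \<le> card V"
  shows "real (2*s+2) \<le> 16 * (ln (real (card V)))\<^sup>2"
proof -
  define L where "L = ln (real (card V))"
  have L2: "L \<ge> ln 2" unfolding L_def using n2 by simp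
  then have Lh: "L \<ge> 1/2" using ln2_ge by linarith
  have "real s * ln 2 = ln (2 ^ s)" by (simp add: ln_realpow)
  also have "\<dots> \<le> L" unfolding L_def using s by (metis of_nat_le_iff of_nat_numeral of_nat_power ln_le_cancel_iff
      of_nat_0_less_iff zero_less_numeral zero_less_power order.strict_trans2)
  finally have sL: "real s * ln 2 \<le> L" .
  have "real s * (1/2) \<le> real s * ln 2" using ln2_ge by (intro mult_left_mono) auto
  then have "real s \<le> 2 * L" using sL by linarith
  then have t4: "real (2*s+2) \<le> 4 * L + 2" by simp
  have "0 \<le> (8*L+2)*(2*L-1)" using Lh by (intro mult_nonneg_nonneg) auto
  then have "4 * L + 2 \<le> 16 * L^2" by (simp add: algebra_simps power2_eq_square)
  then show ?thesis using t4 unfolding L_def by linarith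
qed

theorem mainTheorem5:
  shows "\<exists>c>0. \<exists>C>0. \<forall>(V :: 'a set) (E :: 'a set set).
    simple_graph V E \<and> card V \<ge> 2 \<longrightarrow>
    (let \<alpha> = c / ln (real (card V)) in
     \<exists>(k :: nat) (Vs :: nat \<Rightarrow> 'a set) (Es :: nat \<Rightarrow> 'a set set).
       (\<forall>i<k. Vs i \<subseteq> V \<and> simple_graph (Vs i) (Es i)) \<and>
       (\<forall>i<k. \<forall>j<k. i \<noteq> j \<longrightarrow> Es i \<inter> Es j = {}) \<and>
       (\<Union>i<k. Es i) = E \<and>
       (\<forall>v\<in>V. real (card {i. i < k \<and> v \<in> Vs i}) \<le> C * (ln (real (card V)))\<^sup>2) \<and>
       (\<forall>i<k. weakly_regular (\<alpha> / 4) (Vs i) (Es i) \<and> is_expander \<alpha> (Vs i) (Es i)))"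
proof -
  have main: "\<forall>(V :: 'a set) (E :: 'a set set).
    simple_graph V E \<and> card V \<ge> 2 \<longrightarrow>
    (let \<alpha> = (1/32) / ln (real (card V)) in
     \<exists>(k :: nat) (Vs :: nat \<Rightarrow> 'a set) (Es :: nat \<Rightarrow> 'a set set).
       (\<forall>i<k. Vs i \<subseteq> V \<and> simple_graph (Vs i) (Es i)) \<and>
       (\<forall>i<k. \<forall>j<k. i \<noteq> j \<longrightarrow> Es i \<inter> Es j = {}) \<and>
       (\<Union>i<k. Es i) = E \<and>
       (\<forall>v\<in>V. real (card {i. i < k \<and> v \<in> Vs i}) \<le> 16 * (ln (real (card V)))\<^sup>2) \<and>
       (\<forall>i<k. weakly_regular (\<alpha> / 4) (Vs i) (Es i) \<and> is_expander \<alpha> (Vs i) (Es i)))"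
  proof (intro allI impI)
    fix V :: "'a set" and E :: "'a set set"
    assume a: "simple_graph V E \<and> card V \<ge> 2"
    then have sg: "simple_graph V E" and n2: "card V \<ge> 2" by auto
    define \<alpha> where "\<alpha> = (1/32) / ln (real (card V))"
    obtain s where s1: "2^s \<le> card V" and s2: "card V < 2^(s+1)"
      using ex_power_ivl1[of 2 "card V"] n2 by auto
    have "card E \<le> card V * card V" by (rule card_E_le[OF sg])
    also have "\<dots> < 2^(s+1) * 2^(s+1)" using s2 by (intro mult_strict_mono) auto
    also have "\<dots> = 2^(2*s+2)" by (simp add: power_add[symmetric])
    finally have cE: "card E < 2^(2*s+2)" .
    obtain k Vs Es where g: "goodD V \<alpha> (2*s+2) E k Vs Es"
      using decomp[OF n2 \<alpha>_def sg cE] by blast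
    note g' = g[unfolded goodD_def]
    have tb: "real (2*s+2) \<le> 16 * (ln (real (card V)))\<^sup>2" by (rule t_bound[OF n2 s1])
    have h4: "\<forall>v\<in>V. real (card {i. i < k \<and> v \<in> Vs i}) \<le> 16 * (ln (real (card V)))\<^sup>2"
    proof
      fix v assume "v \<in> V"
      then have "card {i. i < k \<and> v \<in> Vs i} \<le> 2*s+2" using g' by blast
      then have "real (card {i. i < k \<and> v \<in> Vs i}) \<le> real (2*s+2)" by (simp only: of_nat_le_iff)
      then show "real (card {i. i < k \<and> v \<in> Vs i}) \<le> 16 * (ln (real (card V)))\<^sup>2" using tb by linarith
    qed
    show "let \<alpha> = (1/32) / ln (real (card V)) in
     \<exists>(k :: nat) (Vs :: nat \<Rightarrow> 'a set) (Es :: nat \<Rightarrow> 'a set set).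
       (\<forall>i<k. Vs i \<subseteq> V \<and> simple_graph (Vs i) (Es i)) \<and>
       (\<forall>i<k. \<forall>j<k. i \<noteq> j \<longrightarrow> Es i \<inter> Es j = {}) \<and>
       (\<Union>i<k. Es i) = E \<and>
       (\<forall>v\<in>V. real (card {i. i < k \<and> v \<in> Vs i}) \<le> 16 * (ln (real (card V)))\<^sup>2) \<and>
       (\<forall>i<k. weakly_regular (\<alpha> / 4) (Vs i) (Es i) \<and> is_expander \<alpha> (Vs i) (Es i))"
      unfolding Let_def \<alpha>_def[symmetric]
      apply (rule exI[where x=k])
      apply (rule exI[where x=Vs])
      apply (rule exI[where x=Es])
      using g'[THEN conjunct1] g'[THEN conjunct2, THEN conjunct1]
        g'[THEN conjunct2, THEN conjunct2, THEN conjunct1] h4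
        g'[THEN conjunct2, THEN conjunct2, THEN conjunct2, THEN conjunct2]
      by (intro conjI)
  qed
  show ?thesis
    apply (rule exI[where x="1/32"])
    apply (rule conjI, simp)
    apply (rule exI[where x=16])
    apply (rule conjI, simp)
    by (rule main)
qed


end
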